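(* The set $\mathcal{D}=\{G\in\mathcal{T}: (\mathbb{N},G) \text{ is divisible}\}$ is a dense $G_\delta$ subset of $\mathcal{T}$.
   Context: Let $\mathbb{N}^{\mathbb{N}\times\mathbb{N}}$ be the space of functions $\mathbb{N}\times\mathbb{N}\to\mathbb{N}$ with the product of discrete topologies. Let $\mathcal{A}=\{G\in\mathbb{N}^{\mathbb{N}\times\mathbb{N}}: G \text{ is an abelian group operation on } \mathbb{N} \text{ with identity element } 0\}$ and $\mathcal{T}=\{G\in\mathcal{A}: (\mathbb{N},G)\text{ is torsion-free}\}$, with the subspace topology. *)

theory Defs
  imports "HOL-Analysis.Analysis"
begin

type_synonym binop = "nat \<times> nat \<Rightarrow> nat"

definition NNN_top :: "binop topology" where
  "NNN_top = product_topology (\<lambda>_. discrete_topology (UNIV :: nat set)) UNIV"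

definition abgroup_op :: "binop \<Rightarrow> bool" where
  "abgroup_op G \<longleftrightarrow>
     (\<forall>x y z. G (G (x, y), z) = G (x, G (y, z))) \<and>
     (\<forall>x y. G (x, y) = G (y, x)) \<and>
     (\<forall>x. G (0, x) = x) \<and>
     (\<forall>x. \<exists>y. G (x, y) = 0)"

fun gmult :: "binop \<Rightarrow> nat \<Rightarrow> nat \<Rightarrow> nat" where
  "gmult G 0 x = 0"
| "gmult G (Suc n) x = G (x, gmult G n x)"

definition torsion_free :: "binop \<Rightarrow> bool" where
  "torsion_free G \<longleftrightarrow> (\<forall>x n. x \<noteq> 0 \<and> n \<ge> 1 \<longrightarrow> gmult G n x \<noteq> 0)"

definition divisible :: "binop \<Rightarrow> bool" where
  "divisible G \<longleftrightarrow> (\<forall>x n. n \<ge> 1 \<longrightarrow> (\<exists>y. gmult G n y = x))"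

definition AbOps :: "binop set" where
  "AbOps = {G. abgroup_op G}"

definition TFOps :: "binop set" where
  "TFOps = {G \<in> AbOps. torsion_free G}"

definition DivOps :: "binop set" where
  "DivOps = {G \<in> TFOps. divisible G}"

end

theory Submission
  imports Defs
begin


lemma open_NNN:
  assumes "\<And>G. G \<in> S \<Longrightarrow> \<exists>K. finite K \<and> (\<forall>G'. (\<forall>i\<in>K. G' i = G i) \<longrightarrow> G' \<in> S)"
  shows "openin NNN_top S"
  unfolding NNN_top_def openin_product_topology_alt
proof (intro ballI)
  fix G assume "G \<in> S"
  then obtain K where K: "finite K" "\<And>G'. (\<forall>i\<in>K. G' i = G i) \<Longrightarrow> G' \<in> S" using assms by blast
  let ?U = "\<lambda>i. if i \<in> K then {G i} else UNIV"
  have "{i \<in> UNIV. ?U i \<noteq> topspace (discrete_topology UNIV)} \<subseteq> K" by auto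
  then have "finite {i \<in> UNIV. ?U i \<noteq> topspace (discrete_topology UNIV)}" using K(1) finite_subset by blast
  moreover have "G \<in> Pi\<^sub>E UNIV ?U" by auto
  moreover have "Pi\<^sub>E UNIV ?U \<subseteq> S"
  proof
    fix G' assume "G' \<in> Pi\<^sub>E UNIV ?U"
    then have "\<forall>i\<in>K. G' i = G i" by (auto simp: PiE_iff split: if_splits)
    then show "G' \<in> S" using K(2) by blast
  qed
  ultimately show "\<exists>U. finite {i \<in> UNIV. U i \<noteq> topspace (discrete_topology UNIV)} \<and>
           (\<forall>i\<in>UNIV. openin (discrete_topology UNIV) (U i)) \<and> G \<in> Pi\<^sub>E UNIV U \<and> Pi\<^sub>E UNIV U \<subseteq> S"
    by (intro exI[of _ ?U]) auto
qed

lemma nbhd_NNN: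
  assumes "openin NNN_top S" "G \<in> S"
  shows "\<exists>K. finite K \<and> (\<forall>G'. (\<forall>i\<in>K. G' i = G i) \<longrightarrow> G' \<in> S)"
proof -
  obtain U where U: "finite {i \<in> UNIV. U i \<noteq> topspace (discrete_topology (UNIV::nat set))}"
     "G \<in> Pi\<^sub>E UNIV U" "Pi\<^sub>E UNIV U \<subseteq> S"
    using assms unfolding NNN_top_def openin_product_topology_alt by blast
  show ?thesis
  proof (intro exI conjI allI impI)
    show "finite {i. U i \<noteq> UNIV}" using U(1) by simp
    fix G' assume "\<forall>i\<in>{i. U i \<noteq> UNIV}. G' i = G i"
    moreover have "G i \<in> U i" for i using U(2) by (simp add: PiE_iff del: split_paired_All)
    ultimately have "G' i \<in> U i" for i by (metis UNIV_I mem_Collect_eq)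
    then have "G' \<in> Pi\<^sub>E UNIV U" by (auto simp: PiE_iff)
    then show "G' \<in> S" using U(3) by blast
  qed
qed

lemma topspace_NNN[simp]: "topspace NNN_top = UNIV"
  unfolding NNN_top_def by simp



locale abg =
  fixes G :: binop
  assumes ab: "abgroup_op G"
begin

lemma assoc: "G (G (x, y), z) = G (x, G (y, z))" using ab unfolding abgroup_op_def by blast
lemma comm: "G (x, y) = G (y, x)" using ab unfolding abgroup_op_def by blast
lemma lcomm: "G (x, G (y, z)) = G (y, G (x, z))" by (metis assoc comm)
lemmas ac = assoc comm lcomm
lemma lzero[simp]: "G (0, x) = x" using ab unfolding abgroup_op_def by blast
lemma rzero[simp]: "G (x, 0) = x" using lzero comm by metis
lemma inv_ex: "\<exists>y. G (x, y) = 0" using ab unfolding abgroup_op_def by blast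

lemma cancel: "G (x, z) = G (y, z) \<Longrightarrow> x = y"
proof -
  assume h: "G (x, z) = G (y, z)"
  obtain w where w: "G (z, w) = 0" using inv_ex by blast
  have "G (G (x, z), w) = G (G (y, z), w)" using h by simp
  then show "x = y" by (simp add: assoc w)
qed

lemma gm_zero[simp]: "gmult G n 0 = 0" by (induction n) auto
lemma gm_one[simp]: "gmult G 1 x = x" by simp
lemma gm_add: "gmult G (m + n) x = G (gmult G m x, gmult G n x)"
  by (induction m) (auto simp: ac)
lemma gm_distrib: "gmult G n (G (x, y)) = G (gmult G n x, gmult G n y)"
  by (induction n) (auto simp: ac)
lemma gm_mult: "gmult G m (gmult G n x) = gmult G (m * n) x"
  by (induction m) (auto simp: gm_add)

lemma gm_comm: "gmult G m (gmult G n x) = gmult G n (gmult G m x)"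
  by (simp add: gm_mult mult.commute)

end

locale tfg = abg +
  assumes tf: "torsion_free G"
begin

lemma gm_cancel:
  assumes "n \<ge> 1" "gmult G n x = gmult G n y" shows "x = y"
proof -
  obtain w where w: "G (y, w) = 0" using inv_ex by blast
  have "gmult G n (G (x, w)) = gmult G n (G (y, w))" using assms(2) by (simp add: gm_distrib)
  then have "gmult G n (G (x, w)) = 0" by (simp add: w)
  then have "G (x, w) = 0" using tf assms(1) unfolding torsion_free_def by blast
  then show ?thesis using w cancel by metis
qed

definition P :: "(nat \<times> nat) set" where "P = {p. snd p \<ge> 1}"
definition R :: "((nat \<times> nat) \<times> (nat \<times> nat)) set" where
  "R = {((g, n), (h, m)). n \<ge> 1 \<and> m \<ge> 1 \<and> gmult G m g = gmult G n h}"

lemma R_iff[simp]: "((g, n), (h, m)) \<in> R \<longleftrightarrow> n \<ge> 1 \<and> m \<ge> 1 \<and> gmult G m g = gmult G n h"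
  by (simp add: R_def)
lemma P_iff[simp]: "(g, n) \<in> P \<longleftrightarrow> n \<ge> 1" by (simp add: P_def)

lemma equivR: "equiv P R"
proof (rule equivI)
  show "refl_on P R" unfolding refl_on_def P_def R_def by auto
  show "R \<subseteq> P \<times> P" unfolding P_def R_def by auto
  show "sym R" unfolding sym_def R_def by auto
  show "trans R" unfolding trans_def
  proof (clarify)
    fix g n h m l k
    assume a: "((g, n), (h, m)) \<in> R" "((h, m), (l, k)) \<in> R"
    then have m1: "m \<ge> 1" and e1: "gmult G m g = gmult G n h" and e2: "gmult G k h = gmult G m l"
      and n1: "n \<ge> 1" and k1: "k \<ge> 1" by auto
    have "gmult G m (gmult G k g) = gmult G k (gmult G m g)" by (rule gm_comm)
    also have "\<dots> = gmult G k (gmult G n h)" by (simp add: e1)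
    also have "\<dots> = gmult G n (gmult G k h)" by (rule gm_comm)
    also have "\<dots> = gmult G n (gmult G m l)" by (simp add: e2)
    also have "\<dots> = gmult G m (gmult G n l)" by (rule gm_comm)
    finally have "gmult G k g = gmult G n l" using gm_cancel m1 by blast
    then show "((g, n), (l, k)) \<in> R" using n1 k1 by simp
  qed
qed

fun padd :: "nat \<times> nat \<Rightarrow> nat \<times> nat \<Rightarrow> nat \<times> nat" where
  "padd (g, n) (h, m) = (G (gmult G m g, gmult G n h), n * m)"

lemma padd_P: "p \<in> P \<Longrightarrow> q \<in> P \<Longrightarrow> padd p q \<in> P"
  by (cases p; cases q) auto

lemma cong_padd: "congruent2 R R (\<lambda>p q. R `` {padd p q})"
proof (rule congruent2I[OF equivR equivR])
  fix p p' q q' assume "(p, p') \<in> R" "q \<in> P"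
  then obtain g n g' n' h m where pp: "p = (g, n)" "p' = (g', n')" "q = (h, m)"
    and c: "n \<ge> 1" "n' \<ge> 1" "m \<ge> 1" "gmult G n' g = gmult G n g'"
    by (cases p; cases p'; cases q) auto
  have "(padd p q, padd p' q) \<in> R"
  proof -
    have "gmult G (n' * m) (G (gmult G m g, gmult G n h)) = G (gmult G m (gmult G m (gmult G n' g)), gmult G (n' * m * n) h)"
      by (simp add: gm_distrib gm_mult ac_simps)
    also have "\<dots> = G (gmult G m (gmult G m (gmult G n g')), gmult G (n' * m * n) h)" by (simp add: c)
    also have "\<dots> = gmult G (n * m) (G (gmult G m g', gmult G n' h))"
      by (simp add: gm_distrib gm_mult ac_simps)
    finally show ?thesis using c pp by simp
  qed
  then show "R `` {padd p q} = R `` {padd p' q}" using equivR by (simp add: equiv_class_eq)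
next
  fix p q q' assume "(q, q') \<in> R" "p \<in> P"
  then obtain g n h' m' h m where pp: "p = (g, n)" "q' = (h', m')" "q = (h, m)"
    and c: "n \<ge> 1" "m' \<ge> 1" "m \<ge> 1" "gmult G m' h = gmult G m h'"
    by (cases p; cases q'; cases q) auto
  have "(padd p q, padd p q') \<in> R"
  proof -
    have "gmult G (n * m') (G (gmult G m g, gmult G n h)) = G (gmult G (n * m' * m) g, gmult G n (gmult G n (gmult G m' h)))"
      by (simp add: gm_distrib gm_mult ac_simps)
    also have "\<dots> = G (gmult G (n * m' * m) g, gmult G n (gmult G n (gmult G m h')))" by (simp add: c)
    also have "\<dots> = gmult G (n * m) (G (gmult G m' g, gmult G n h'))"
      by (simp add: gm_distrib gm_mult ac_simps)
    finally show ?thesis using c pp by simp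
  qed
  then show "R `` {padd p q} = R `` {padd p q'}" using equivR by (simp add: equiv_class_eq)
qed


definition D where "D = P // R"
definition cls where "cls p = R `` {p}"
definition addD where "addD X Y = (\<Union>p\<in>X. \<Union>q\<in>Y. R `` {padd p q})"
definition zeroD where "zeroD = cls (0, 1)"

lemma addD_cls: "p \<in> P \<Longrightarrow> q \<in> P \<Longrightarrow> addD (cls p) (cls q) = cls (padd p q)"
  unfolding addD_def cls_def using UN_equiv_class2[OF equivR equivR cong_padd] by blast

lemma cls_D: "p \<in> P \<Longrightarrow> cls p \<in> D"
  unfolding cls_def D_def by (rule quotientI)

lemma D_E: "X \<in> D \<Longrightarrow> (\<And>g n. n \<ge> 1 \<Longrightarrow> X = cls (g, n) \<Longrightarrow> thesis) \<Longrightarrow> thesis"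
  unfolding D_def cls_def by (auto elim!: quotientE simp: P_def)

lemma cls_eq: "p \<in> P \<Longrightarrow> q \<in> P \<Longrightarrow> cls p = cls q \<longleftrightarrow> (p, q) \<in> R"
  unfolding cls_def using eq_equiv_class_iff[OF equivR] by blast

lemma cls_eqI: "n \<ge> 1 \<Longrightarrow> m \<ge> 1 \<Longrightarrow> gmult G m g = gmult G n h \<Longrightarrow> cls (g, n) = cls (h, m)"
  by (simp add: cls_eq)

lemma addD_cls'[simp]: "n \<ge> 1 \<Longrightarrow> m \<ge> 1 \<Longrightarrow>
   addD (cls (g, n)) (cls (h, m)) = cls (G (gmult G m g, gmult G n h), n * m)"
  by (simp add: addD_cls)

lemma zeroD_D: "zeroD \<in> D" unfolding zeroD_def by (rule cls_D) simp

lemma addD_D: "X \<in> D \<Longrightarrow> Y \<in> D \<Longrightarrow> addD X Y \<in> D"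
  by (erule D_E, erule D_E) (auto intro!: cls_D)

lemma addD_assoc: "X \<in> D \<Longrightarrow> Y \<in> D \<Longrightarrow> Z \<in> D \<Longrightarrow> addD (addD X Y) Z = addD X (addD Y Z)"
  by (erule D_E, erule D_E, erule D_E) (simp add: gm_distrib gm_mult ac_simps assoc)

lemma addD_comm: "X \<in> D \<Longrightarrow> Y \<in> D \<Longrightarrow> addD X Y = addD Y X"
  by (erule D_E, erule D_E) (simp add: ac_simps comm)

lemma addD_zero: "X \<in> D \<Longrightarrow> addD zeroD X = X"
  by (erule D_E) (simp add: zeroD_def)

lemma addD_inv: "X \<in> D \<Longrightarrow> \<exists>Y\<in>D. addD X Y = zeroD"
proof (erule D_E)
  fix g n assume n: "n \<ge> 1" and X: "X = cls (g, n)"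
  obtain w where w: "G (g, w) = 0" using inv_ex by blast
  have "addD X (cls (w, n)) = zeroD"
    using n by (simp add: X zeroD_def gm_distrib[symmetric] w cls_eq)
  then show ?thesis using n cls_D by auto
qed

fun gmD where
  "gmD 0 X = zeroD"
| "gmD (Suc k) X = addD X (gmD k X)"

lemma gmD_cls: "n \<ge> 1 \<Longrightarrow> gmD k (cls (g, n)) = cls (gmult G k g, n)"
proof (induction k)
  case 0 then show ?case by (simp add: zeroD_def cls_eq)
next
  case (Suc k)
  then show ?case by (simp add: cls_eq gm_distrib gm_mult ac_simps)
qed

lemma gmD_D: "X \<in> D \<Longrightarrow> gmD k X \<in> D"
  by (induction k) (auto simp: zeroD_D addD_D)

lemma D_tf: "X \<in> D \<Longrightarrow> k \<ge> 1 \<Longrightarrow> gmD k X = zeroD \<Longrightarrow> X = zeroD"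
proof (erule D_E)
  fix g n assume n: "n \<ge> 1" and X: "X = cls (g, n)" and k: "k \<ge> 1" and z: "gmD k X = zeroD"
  then have "gmult G k g = 0" by (simp add: gmD_cls zeroD_def cls_eq)
  then have "g = 0" using tf k unfolding torsion_free_def by blast
  then show "X = zeroD" using n by (simp add: X zeroD_def cls_eq)
qed

lemma D_div: "X \<in> D \<Longrightarrow> k \<ge> 1 \<Longrightarrow> \<exists>Y\<in>D. gmD k Y = X"
proof (erule D_E)
  fix g n assume n: "n \<ge> 1" and X: "X = cls (g, n)" and k: "k \<ge> 1"
  have "gmD k (cls (g, n * k)) = X" using n k by (simp add: X gmD_cls cls_eq gm_mult ac_simps)
  moreover have "cls (g, n * k) \<in> D" using n k by (intro cls_D) simp
  ultimately show ?thesis by blast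
qed

definition emb where "emb g = cls (g, 1)"

lemma emb_D: "emb g \<in> D" unfolding emb_def by (rule cls_D) simp
lemma emb_inj: "inj emb" unfolding emb_def inj_def by (simp add: cls_eq)
lemma emb_add: "addD (emb a) (emb b) = emb (G (a, b))" unfolding emb_def by simp
lemma emb_zero: "emb 0 = zeroD" unfolding emb_def zeroD_def by simp

lemma D_countable: "countable D"
proof -
  have "D \<subseteq> cls ` UNIV" by (auto elim: D_E)
  then show ?thesis by (meson countable_image countable_subset countableI_type)
qed

lemma D_infinite: "infinite D"
proof
  assume "finite D"
  then have "finite (range emb)" using emb_D by (meson finite_subset image_subsetI)
  then show False using emb_inj finite_imageD by blast
qed


lemma realize:
  assumes S: "finite S" "0 \<in> S"
  shows "\<exists>G'. G' \<in> DivOps \<and> (\<forall>a\<in>S. \<forall>b\<in>S. G (a, b) \<in> S \<longrightarrow> G' (a, b) = G (a, b))"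
proof -
  define A where "A = UNIV - S"
  define B where "B = D - emb ` S"
  have Ainf: "infinite A" using S(1) unfolding A_def by (simp add: Diff_infinite_finite)
  have Binf: "infinite B" using S(1) D_infinite unfolding B_def by (simp add: Diff_infinite_finite)
  have Bc: "countable B" using D_countable unfolding B_def by simp
  define h where "h = from_nat_into B \<circ> to_nat_on A"
  have hb: "bij_betw h A B" unfolding h_def
    using bij_betw_trans[OF to_nat_on_infinite[OF _ Ainf] bij_betw_from_nat_into[OF Bc Binf]] by simp
  define f where "f x = (if x \<in> S then emb x else h x)" for x
  have b1: "bij_betw f S (emb ` S)"
    by (rule bij_betw_cong[THEN iffD2, of _ _ emb]) (auto simp: f_def inj_on_imp_bij_betw emb_inj inj_on_subset[OF emb_inj])
  have b2: "bij_betw f A B"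
    by (rule bij_betw_cong[THEN iffD2, OF _ hb]) (auto simp: f_def A_def)
  have fb: "bij_betw f UNIV D"
  proof -
    have "bij_betw f (S \<union> A) (emb ` S \<union> B)" by (rule bij_betw_combine[OF b1 b2]) (auto simp: B_def)
    moreover have "S \<union> A = UNIV" by (auto simp: A_def)
    moreover have "emb ` S \<union> B = D" using emb_D by (auto simp: B_def)
    ultimately show ?thesis by simp
  qed
  define g where "g = inv_into UNIV f"
  have fD: "f x \<in> D" for x using fb by (auto simp: bij_betw_def)
  have fg: "Y \<in> D \<Longrightarrow> f (g Y) = Y" for Y using fb unfolding g_def bij_betw_def by (metis f_inv_into_f)
  have gf: "g (f x) = x" for x using fb unfolding g_def bij_betw_def by (auto intro: inv_into_f_f)
  have f0: "f 0 = zeroD" using S(2) by (simp add: f_def emb_zero)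
  have g0: "g zeroD = 0" using gf f0 by metis
  have ginj: "X \<in> D \<Longrightarrow> Y \<in> D \<Longrightarrow> g X = g Y \<Longrightarrow> X = Y" for X Y using fg by metis
  define G' where "G' = (\<lambda>(a, b). g (addD (f a) (f b)))"
  have G'ab: "G' (a, b) = g (addD (f a) (f b))" for a b by (simp add: G'_def)
  have ab': "abgroup_op G'"
    unfolding abgroup_op_def
  proof (intro conjI allI)
    fix x y z
    show "G' (G' (x, y), z) = G' (x, G' (y, z))"
      by (simp add: G'ab fg addD_D fD addD_assoc)
    show "G' (x, y) = G' (y, x)" by (simp add: G'ab addD_comm fD)
    show "G' (0, x) = x" by (simp add: G'ab f0 addD_zero fD gf)
    obtain Y where Y: "Y \<in> D" "addD (f x) Y = zeroD" using addD_inv fD by blast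
    show "\<exists>y. G' (x, y) = 0" using Y by (intro exI[of _ "g Y"]) (simp add: G'ab fg g0)
  qed
  have gmG': "gmult G' n x = g (gmD n (f x))" for n x
  proof (induction n)
    case 0 then show ?case by (simp add: g0)
  next
    case (Suc n) then show ?case by (simp add: G'ab fg gmD_D fD)
  qed
  have tf': "torsion_free G'" unfolding torsion_free_def
  proof (intro allI impI)
    fix x n :: nat assume a: "x \<noteq> 0 \<and> n \<ge> (1::nat)"
    show "gmult G' n x \<noteq> 0"
    proof
      assume "gmult G' n x = 0"
      then have "g (gmD n (f x)) = g zeroD" by (simp add: gmG' g0)
      then have "gmD n (f x) = zeroD" using ginj gmD_D fD zeroD_D by blast
      then have "f x = zeroD" using D_tf fD a by blast
      then have "x = 0" using gf g0 by metis
      then show False using a by simp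
    qed
  qed
  have dv': "divisible G'" unfolding divisible_def
  proof (intro allI impI)
    fix x n :: nat assume n: "n \<ge> (1::nat)"
    obtain Y where Y: "Y \<in> D" "gmD n Y = f x" using D_div fD n by blast
    show "\<exists>y. gmult G' n y = x" using Y by (intro exI[of _ "g Y"]) (simp add: gmG' fg gf)
  qed
  have agree: "\<forall>a\<in>S. \<forall>b\<in>S. G (a, b) \<in> S \<longrightarrow> G' (a, b) = G (a, b)"
  proof (intro ballI impI)
    fix a b assume "a \<in> S" "b \<in> S" "G (a, b) \<in> S"
    then have "G' (a, b) = g (f (G (a, b)))" by (simp add: G'ab f_def emb_add)
    then show "G' (a, b) = G (a, b)" by (simp add: gf)
  qed
  show ?thesis using ab' tf' dv' agree
    by (intro exI[of _ G']) (simp add: DivOps_def TFOps_def AbOps_def)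
qed

end


lemma gmult_local:
  assumes "\<forall>i\<in>(\<lambda>k. (y, gmult G k y)) ` {..<n}. G' i = G i" "k \<le> n"
  shows "gmult G' k y = gmult G k y"
  using assms(2)
proof (induction k)
  case 0 then show ?case by simp
next
  case (Suc k)
  then have "G' (y, gmult G k y) = G (y, gmult G k y)" using assms(1) by auto
  then show ?case using Suc by simp
qed

lemma V_open: "openin NNN_top {G. \<exists>y. gmult G n y = x}"
proof (rule open_NNN)
  fix G assume "G \<in> {G. \<exists>y. gmult G n y = x}"
  then obtain y where y: "gmult G n y = x" by blast
  show "\<exists>K. finite K \<and> (\<forall>G'. (\<forall>i\<in>K. G' i = G i) \<longrightarrow> G' \<in> {G. \<exists>y. gmult G n y = x})"
  proof (intro exI conjI allI impI)
    show "finite ((\<lambda>k. (y, gmult G k y)) ` {..<n})" by simp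
    fix G' assume "\<forall>i\<in>(\<lambda>k. (y, gmult G k y)) ` {..<n}. G' i = G i"
    then have "gmult G' n y = gmult G n y" by (rule gmult_local) simp
    then show "G' \<in> {G. \<exists>y. gmult G n y = x}" using y by blast
  qed
qed

theorem lemma4p3:
  shows "gdelta_in (subtopology NNN_top TFOps) DivOps \<and>
         (subtopology NNN_top TFOps) closure_of DivOps = topspace (subtopology NNN_top TFOps)"
proof
  define W where "W = (\<lambda>(x, n). TFOps \<inter> {G. \<exists>y. gmult G (Suc n) y = x})"
  have "DivOps = \<Inter> (range W)"
  proof (rule set_eqI)
    fix G
    have "divisible G \<longleftrightarrow> (\<forall>x n. \<exists>y. gmult G (Suc n) y = x)"
      unfolding divisible_def
    proof (intro iffI allI impI)
      fix x n :: nat assume "\<forall>x n. 1 \<le> n \<longrightarrow> (\<exists>y. gmult G n y = x)"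
      then show "\<exists>y. gmult G (Suc n) y = x" by (metis le_add1 plus_1_eq_Suc)
    next
      fix x n :: nat assume h: "\<forall>x n. \<exists>y. gmult G (Suc n) y = x" and n: "1 \<le> n"
      then have "n = Suc (n - 1)" by simp
      then show "\<exists>y. gmult G n y = x" using h by metis
    qed
    then show "G \<in> DivOps \<longleftrightarrow> G \<in> \<Inter> (range W)"
      unfolding W_def DivOps_def by auto
  qed
  moreover have "gdelta_in (subtopology NNN_top TFOps) (\<Inter> (range W))"
  proof (rule gdelta_in_Inter)
    fix S assume "S \<in> range W"
    then obtain x n where "S = TFOps \<inter> {G. \<exists>y. gmult G (Suc n) y = x}" by (auto simp: W_def)
    then have "openin (subtopology NNN_top TFOps) S"
      unfolding openin_subtopology
      by (intro exI[of _ "{G. \<exists>y. gmult G (Suc n) y = x}"] conjI V_open) auto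
    then show "gdelta_in (subtopology NNN_top TFOps) S" by (rule open_imp_gdelta_in)
  qed auto
  ultimately show "gdelta_in (subtopology NNN_top TFOps) DivOps" by simp
next
  have "topspace (subtopology NNN_top TFOps) \<subseteq> (subtopology NNN_top TFOps) closure_of DivOps"
  proof
    fix G assume G: "G \<in> topspace (subtopology NNN_top TFOps)"
    then have GT: "G \<in> TFOps" by simp
    have "abgroup_op G" "torsion_free G" using GT unfolding TFOps_def AbOps_def by auto
    then interpret tfg G by (intro tfg.intro abg.intro tfg_axioms.intro)
    show "G \<in> (subtopology NNN_top TFOps) closure_of DivOps"
      unfolding in_closure_of
    proof (intro conjI allI impI G)
      fix T assume T: "G \<in> T \<and> openin (subtopology NNN_top TFOps) T"
      then obtain T' where T': "openin NNN_top T'" "T = T' \<inter> TFOps" unfolding openin_subtopology by blast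
      have "G \<in> T'" using T T'(2) by simp
      from nbhd_NNN[OF T'(1) this] obtain K where K: "finite K" "\<forall>G'. (\<forall>i\<in>K. G' i = G i) \<longrightarrow> G' \<in> T'"
        by blast
      define S where "S = insert 0 (fst ` K \<union> snd ` K \<union> G ` K)"
      have S1: "finite S" using K(1) unfolding S_def by simp
      have S2: "0 \<in> S" unfolding S_def by simp
      obtain G' where G'1: "G' \<in> DivOps" and G'2: "\<forall>a\<in>S. \<forall>b\<in>S. G (a, b) \<in> S \<longrightarrow> G' (a, b) = G (a, b)"
        using realize[OF S1 S2] by blast
      have "\<forall>i\<in>K. G' i = G i"
      proof
        fix i assume i: "i \<in> K"
        obtain a b where ab: "i = (a, b)" by (cases i)
        have "a = fst i" "b = snd i" "G (a, b) = G i" using ab by auto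
        then have "a \<in> S" "b \<in> S" "G (a, b) \<in> S" using i unfolding S_def by blast+
        then show "G' i = G i" using G'2 ab by simp
      qed
      then have "G' \<in> T'" using K(2) by blast
      moreover have "G' \<in> TFOps" using G'1 by (simp add: DivOps_def)
      ultimately show "\<exists>y. y \<in> DivOps \<and> y \<in> T" using G'1 T'(2) by (intro exI[of _ G']) simp
    qed
  qed
  then show "(subtopology NNN_top TFOps) closure_of DivOps = topspace (subtopology NNN_top TFOps)"
    using closure_of_subset_topspace subset_antisym by metis
qed

end
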